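(* Let $0<r<1$ be fixed and for each $n$ let $\mathbf{X},\mathbf{Y}\sim N(0,\Sigma)$ be independent, where $\Sigma=(1-r)I_n+r\mathbf{1}\mathbf{1}^\top$. Then (i) $\sqrt n\,T_n\xrightarrow{d}N(0,(1-r)^2)$ and (ii) $\sqrt n\,\rho_n\xrightarrow{d}N(0,1)$.
   Context: Sample covariance $T_n=\frac1n\sum_{i=1}^n(X_i-\overline{\mathbf{X}}_n)(Y_i-\overline{\mathbf{Y}}_n)$; sample correlation $\rho_n=\frac{\sum_{i}(X_i-\overline{\mathbf{X}}_n)(Y_i-\overline{\mathbf{Y}}_n)}{\sqrt{\sum_i(X_i-\overline{\mathbf{X}}_n)^2}\sqrt{\sum_i(Y_i-\overline{\mathbf{Y}}_n)^2}}$, with $\overline{\mathbf{X}}_n,\overline{\mathbf{Y}}_n$ the sample means; $\mathbf{1}$ is the all-ones vector. *)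

theory Defs
  imports "HOL-Probability.Probability"
begin

definition equicorr :: "real \<Rightarrow> nat \<Rightarrow> nat \<Rightarrow> real" where
  "equicorr r i j = (1 - r) * (if i = j then 1 else 0) + r"

text \<open>Centered multivariate normal N(0, S) for the random vector (X 0, ..., X (n-1)) on M,
  via the standard (Cramer--Wold) definition: every linear form a . X is N(0, a^T S a),
  degenerate (a.s. zero) when the variance a^T S a vanishes.\<close>
definition is_mvn0 :: "'a measure \<Rightarrow> nat \<Rightarrow> (nat \<Rightarrow> nat \<Rightarrow> real) \<Rightarrow> (nat \<Rightarrow> 'a \<Rightarrow> real) \<Rightarrow> bool" where
  "is_mvn0 M n S X \<longleftrightarrow>
     (\<forall>i<n. X i \<in> borel_measurable M) \<and>
     (\<forall>a :: nat \<Rightarrow> real.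
        let q = (\<Sum>i<n. \<Sum>j<n. a i * S i j * a j) in
        (0 < q \<longrightarrow> distributed M lborel (\<lambda>\<omega>. \<Sum>i<n. a i * X i \<omega>) (normal_density 0 (sqrt q))) \<and>
        (q = 0 \<longrightarrow> (AE \<omega> in M. (\<Sum>i<n. a i * X i \<omega>) = 0)))"

definition sample_mean :: "nat \<Rightarrow> (nat \<Rightarrow> real) \<Rightarrow> real" where
  "sample_mean n x = (\<Sum>i<n. x i) / real n"

definition sample_cov :: "nat \<Rightarrow> (nat \<Rightarrow> real) \<Rightarrow> (nat \<Rightarrow> real) \<Rightarrow> real" where
  "sample_cov n x y = (\<Sum>i<n. (x i - sample_mean n x) * (y i - sample_mean n y)) / real n"

definition sample_corr :: "nat \<Rightarrow> (nat \<Rightarrow> real) \<Rightarrow> (nat \<Rightarrow> real) \<Rightarrow> real" where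
  "sample_corr n x y =
     (\<Sum>i<n. (x i - sample_mean n x) * (y i - sample_mean n y)) /
     (sqrt (\<Sum>i<n. (x i - sample_mean n x)\<^sup>2) * sqrt (\<Sum>i<n. (y i - sample_mean n y)\<^sup>2))"

end

theory Submission
  imports Defs
begin


definition qf :: "real \<Rightarrow> nat \<Rightarrow> (nat \<Rightarrow> real) \<Rightarrow> real" where
  "qf r n a = (\<Sum>i<n. \<Sum>j<n. a i * equicorr r i j * a j)"

lemma qf_eq: "qf r n a = (1-r)*(\<Sum>i<n. (a i)\<^sup>2) + r*(\<Sum>i<n. a i)\<^sup>2"
proof -
  have "qf r n a = (\<Sum>i<n. \<Sum>j<n. (1-r) * (if i = j then a i * a j else 0) + r * (a i * a j))"
    unfolding qf_def equicorr_def by (intro sum.cong refl) (auto simp: algebra_simps)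
  also have "\<dots> = (1-r)*(\<Sum>i<n. (a i)\<^sup>2) + r*(\<Sum>i<n. \<Sum>j<n. a i * a j)"
    by (simp add: sum.distrib sum_distrib_left power2_eq_square sum.delta if_distrib[of "\<lambda>x. (1-r)*x"] cong: if_cong)
  also have "(\<Sum>i<n. \<Sum>j<n. a i * a j) = (\<Sum>i<n. a i)\<^sup>2"
    by (simp add: power2_eq_square sum_product)
  finally show ?thesis .
qed

lemma qf_nonneg: "0 \<le> r \<Longrightarrow> r \<le> 1 \<Longrightarrow> 0 \<le> qf r n a"
  unfolding qf_eq by (intro add_nonneg_nonneg mult_nonneg_nonneg sum_nonneg) auto

lemma std_normal_affine_distr:
  assumes "0 < s"
  shows "distr std_normal_distribution borel (\<lambda>x. s * x) = density lborel (normal_density 0 s)"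
proof -
  interpret S: prob_space std_normal_distribution using prob_space_normal_density[of 1 0] by simp
  have d: "distributed std_normal_distribution lborel (\<lambda>x. x) std_normal_density"
    unfolding distributed_def by (auto simp: distr_id2)
  have "distributed std_normal_distribution lborel (\<lambda>x. 0 + s * x) (normal_density (0 + s * 0) (\<bar>s\<bar> * 1))"
    by (rule S.normal_density_affine[OF d]) (use assms in auto)
  then have "distr std_normal_distribution lborel (\<lambda>x. s * x) = density lborel (normal_density 0 s)"
    using assms unfolding distributed_def by simp
  moreover have "distr std_normal_distribution borel (\<lambda>x. s * x) = distr std_normal_distribution lborel (\<lambda>x. s * x)"
    by (rule distr_cong) auto
  ultimately show ?thesis by simp
qed

lemma mvn_lin_distr:
  assumes P: "prob_space P" and Z: "is_mvn0 P n (equicorr r) Z" and r: "0 \<le> r" "r \<le> 1"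
  shows "distr P borel (\<lambda>\<omega>. \<Sum>i<n. a i * Z i \<omega>) = distr std_normal_distribution borel (\<lambda>x. sqrt (qf r n a) * x)"
proof -
  interpret prob_space P by fact
  have meas[measurable]: "\<And>i. i < n \<Longrightarrow> Z i \<in> borel_measurable P" using Z unfolding is_mvn0_def by auto
  have Lm: "(\<lambda>\<omega>. \<Sum>i<n. a i * Z i \<omega>) \<in> borel_measurable P" by measurable
  have q0: "0 \<le> qf r n a" by (rule qf_nonneg[OF r])
  show ?thesis
  proof (cases "qf r n a = 0")
    case True
    then have ae: "AE \<omega> in P. (\<Sum>i<n. a i * Z i \<omega>) = 0"
      using Z unfolding is_mvn0_def qf_def Let_def by auto
    have "distr P borel (\<lambda>\<omega>. \<Sum>i<n. a i * Z i \<omega>) = distr P borel (\<lambda>\<omega>. 0)"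
      by (rule distr_cong_AE) (use ae Lm in auto)
    also have "\<dots> = return borel 0" by (simp add: distr_const)
    also have "\<dots> = distr std_normal_distribution borel (\<lambda>x. sqrt (qf r n a) * x)"
    proof -
      interpret S: prob_space std_normal_distribution using prob_space_normal_density[of 1 0] by simp
      show ?thesis using True by (simp add: S.distr_const)
    qed
    finally show ?thesis .
  next
    case False
    then have qp: "0 < qf r n a" using q0 by simp
    then have "distributed P lborel (\<lambda>\<omega>. \<Sum>i<n. a i * Z i \<omega>) (normal_density 0 (sqrt (qf r n a)))"
      using Z unfolding is_mvn0_def qf_def Let_def by auto
    then have "distr P lborel (\<lambda>\<omega>. \<Sum>i<n. a i * Z i \<omega>) = density lborel (normal_density 0 (sqrt (qf r n a)))"
      unfolding distributed_def by simp
    moreover have "distr P borel (\<lambda>\<omega>. \<Sum>i<n. a i * Z i \<omega>) = distr P lborel (\<lambda>\<omega>. \<Sum>i<n. a i * Z i \<omega>)"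
      by (rule distr_cong) auto
    ultimately show ?thesis using std_normal_affine_distr[of "sqrt (qf r n a)"] qp by simp
  qed
qed



lemma std_m2: "integrable std_normal_distribution (\<lambda>x. x^2)" "(\<integral>x. x^2 \<partial>std_normal_distribution) = 1"
  using std_normal_distribution_even_moments[of 1] by (auto simp: numeral_eq_Suc)
lemma std_m4: "integrable std_normal_distribution (\<lambda>x. x^4)" "(\<integral>x. x^4 \<partial>std_normal_distribution) = 3"
  using std_normal_distribution_even_moments[of 2] by (auto simp: numeral_eq_Suc fact_numeral)

context
  fixes P :: "'a measure" and n :: nat and r :: real and Z :: "nat \<Rightarrow> 'a \<Rightarrow> real"
  assumes P: "prob_space P" and Z: "is_mvn0 P n (equicorr r) Z" and r: "0 < r" "r < 1"
begin

lemma Zmeas[measurable]: "i < n \<Longrightarrow> Z i \<in> borel_measurable P" using Z unfolding is_mvn0_def by auto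

lemma lin_meas[measurable]: "(\<lambda>\<omega>. \<Sum>i<n. a i * Z i \<omega>) \<in> borel_measurable P"
  by measurable

lemma lin_int:
  fixes g :: "real \<Rightarrow> 'b::{banach,second_countable_topology}"
  assumes [measurable]: "g \<in> borel_measurable borel"
  shows "(\<integral>\<omega>. g (\<Sum>i<n. a i * Z i \<omega>) \<partial>P) = (\<integral>x. g (sqrt (qf r n a) * x) \<partial>std_normal_distribution)"
    and "integrable P (\<lambda>\<omega>. g (\<Sum>i<n. a i * Z i \<omega>)) = integrable std_normal_distribution (\<lambda>x. g (sqrt (qf r n a) * x))"
proof -
  have e: "distr P borel (\<lambda>\<omega>. \<Sum>i<n. a i * Z i \<omega>) = distr std_normal_distribution borel (\<lambda>x. sqrt (qf r n a) * x)"
    by (rule mvn_lin_distr[OF P Z]) (use r in auto)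
  have "(\<integral>\<omega>. g (\<Sum>i<n. a i * Z i \<omega>) \<partial>P) = (\<integral>y. g y \<partial>distr P borel (\<lambda>\<omega>. \<Sum>i<n. a i * Z i \<omega>))"
    by (simp add: integral_distr)
  also have "\<dots> = (\<integral>x. g (sqrt (qf r n a) * x) \<partial>std_normal_distribution)"
    unfolding e by (simp add: integral_distr)
  finally show "(\<integral>\<omega>. g (\<Sum>i<n. a i * Z i \<omega>) \<partial>P) = (\<integral>x. g (sqrt (qf r n a) * x) \<partial>std_normal_distribution)" .
  have "integrable P (\<lambda>\<omega>. g (\<Sum>i<n. a i * Z i \<omega>)) = integrable (distr P borel (\<lambda>\<omega>. \<Sum>i<n. a i * Z i \<omega>)) g"
    by (simp add: integrable_distr_eq)
  also have "\<dots> = integrable std_normal_distribution (\<lambda>x. g (sqrt (qf r n a) * x))"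
    unfolding e by (simp add: integrable_distr_eq)
  finally show "integrable P (\<lambda>\<omega>. g (\<Sum>i<n. a i * Z i \<omega>)) = integrable std_normal_distribution (\<lambda>x. g (sqrt (qf r n a) * x))" .
qed

lemma lin_nn:
  assumes [measurable]: "g \<in> borel_measurable borel"
  shows "(\<integral>\<^sup>+\<omega>. g (\<Sum>i<n. a i * Z i \<omega>) \<partial>P) = (\<integral>\<^sup>+x. g (sqrt (qf r n a) * x) \<partial>std_normal_distribution)"
proof -
  have e: "distr P borel (\<lambda>\<omega>. \<Sum>i<n. a i * Z i \<omega>) = distr std_normal_distribution borel (\<lambda>x. sqrt (qf r n a) * x)"
    by (rule mvn_lin_distr[OF P Z]) (use r in auto)
  have "(\<integral>\<^sup>+\<omega>. g (\<Sum>i<n. a i * Z i \<omega>) \<partial>P) = (\<integral>\<^sup>+y. g y \<partial>distr P borel (\<lambda>\<omega>. \<Sum>i<n. a i * Z i \<omega>))"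
    by (simp add: nn_integral_distr)
  also have "\<dots> = (\<integral>\<^sup>+x. g (sqrt (qf r n a) * x) \<partial>std_normal_distribution)"
    unfolding e by (simp add: nn_integral_distr)
  finally show ?thesis .
qed

lemma qf0: "0 \<le> qf r n a" using qf_nonneg r by auto

lemma lin_m2: "integrable P (\<lambda>\<omega>. (\<Sum>i<n. a i * Z i \<omega>)^2)" "(\<integral>\<omega>. (\<Sum>i<n. a i * Z i \<omega>)^2 \<partial>P) = qf r n a"
proof -
  have eq: "(\<lambda>x. (sqrt (qf r n a) * x)^2) = (\<lambda>x. qf r n a * x^2)"
    using qf0 by (auto simp: power_mult_distrib)
  show "integrable P (\<lambda>\<omega>. (\<Sum>i<n. a i * Z i \<omega>)^2)"
    using lin_int(2)[of "\<lambda>x. x^2" a] std_m2 by (simp add: eq)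
  show "(\<integral>\<omega>. (\<Sum>i<n. a i * Z i \<omega>)^2 \<partial>P) = qf r n a"
    using lin_int(1)[of "\<lambda>x. x^2" a] std_m2 by (simp add: eq)
qed

lemma lin_m4: "integrable P (\<lambda>\<omega>. (\<Sum>i<n. a i * Z i \<omega>)^4)" "(\<integral>\<omega>. (\<Sum>i<n. a i * Z i \<omega>)^4 \<partial>P) = 3 * (qf r n a)^2"
proof -
  have eq: "(\<lambda>x. (sqrt (qf r n a) * x)^4) = (\<lambda>x. (qf r n a)^2 * x^4)"
  proof
    fix x
    have "(sqrt (qf r n a) * x)^4 = ((sqrt (qf r n a))^2)^2 * x^4" by (simp add: power_mult_distrib flip: power_mult)
    then show "(sqrt (qf r n a) * x)^4 = (qf r n a)^2 * x^4" using qf0 by simp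
  qed
  show "integrable P (\<lambda>\<omega>. (\<Sum>i<n. a i * Z i \<omega>)^4)"
    using lin_int(2)[of "\<lambda>x. x^4" a] std_m4 by (simp add: eq)
  show "(\<integral>\<omega>. (\<Sum>i<n. a i * Z i \<omega>)^4 \<partial>P) = 3 * (qf r n a)^2"
    using lin_int(1)[of "\<lambda>x. x^4" a] std_m4 by (simp add: eq)
qed

lemma lin_char: "(\<integral>\<omega>. iexp (t * (\<Sum>i<n. a i * Z i \<omega>)) \<partial>P) = complex_of_real (exp (- (t^2 * qf r n a) / 2))"
proof -
  have "(\<integral>\<omega>. iexp (t * (\<Sum>i<n. a i * Z i \<omega>)) \<partial>P) = (\<integral>x. iexp (t * (sqrt (qf r n a) * x)) \<partial>std_normal_distribution)"
    by (rule lin_int(1)) measurable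
  also have "\<dots> = char std_normal_distribution (t * sqrt (qf r n a))"
    unfolding char_def by (simp add: ac_simps)
  also have "\<dots> = complex_of_real (exp (- (t^2 * qf r n a) / 2))"
    using qf0 by (simp add: char_std_normal_distribution power_mult_distrib)
  finally show ?thesis .
qed

lemma lin_nn2: "(\<integral>\<^sup>+\<omega>. ennreal ((\<Sum>i<n. a i * Z i \<omega>)^2) \<partial>P) = ennreal (qf r n a)"
proof -
  interpret prob_space P by (rule P)
  have "(\<integral>\<^sup>+\<omega>. ennreal ((\<Sum>i<n. a i * Z i \<omega>)^2) \<partial>P) = ennreal (\<integral>\<omega>. (\<Sum>i<n. a i * Z i \<omega>)^2 \<partial>P)"
    by (rule nn_integral_eq_integral) (auto intro: lin_m2)
  then show ?thesis using lin_m2 by simp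
qed

lemma lin_add: "(\<Sum>i<n. (a i + b i) * Z i \<omega>) = (\<Sum>i<n. a i * Z i \<omega>) + (\<Sum>i<n. b i * Z i \<omega>)"
  by (simp add: distrib_right sum.distrib)
lemma lin_diff: "(\<Sum>i<n. (a i - b i) * Z i \<omega>) = (\<Sum>i<n. a i * Z i \<omega>) - (\<Sum>i<n. b i * Z i \<omega>)"
  by (simp add: left_diff_distrib sum_subtractf)

lemma lin_prod22:
  shows "integrable P (\<lambda>\<omega>. (\<Sum>i<n. a i * Z i \<omega>)^2 * (\<Sum>i<n. b i * Z i \<omega>)^2)"
    and "(\<integral>\<omega>. (\<Sum>i<n. a i * Z i \<omega>)^2 * (\<Sum>i<n. b i * Z i \<omega>)^2 \<partial>P)
         = (3 * (qf r n (\<lambda>i. a i + b i))^2 + 3 * (qf r n (\<lambda>i. a i - b i))^2 - 6 * (qf r n a)^2 - 6 * (qf r n b)^2) / 12"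
proof -
  define A where "A \<omega> = (\<Sum>i<n. a i * Z i \<omega>)" for \<omega>
  define B where "B \<omega> = (\<Sum>i<n. b i * Z i \<omega>)" for \<omega>
  have id: "(A \<omega>)^2 * (B \<omega>)^2 = ((\<Sum>i<n. (a i + b i) * Z i \<omega>)^4 + (\<Sum>i<n. (a i - b i) * Z i \<omega>)^4 - 2 * (A \<omega>)^4 - 2 * (B \<omega>)^4) / 12" for \<omega>
    unfolding lin_add lin_diff A_def[symmetric] B_def[symmetric]
    by (simp add: power_def algebra_simps)
  note i1 = lin_m4(1)[of "\<lambda>i. a i + b i"] and i2 = lin_m4(1)[of "\<lambda>i. a i - b i"]
     and i3 = lin_m4(1)[of a] and i4 = lin_m4(1)[of b]
  have idf: "(\<lambda>\<omega>. (\<Sum>i<n. a i * Z i \<omega>)^2 * (\<Sum>i<n. b i * Z i \<omega>)^2) = (\<lambda>\<omega>. ((\<Sum>i<n. (a i + b i) * Z i \<omega>)^4 + (\<Sum>i<n. (a i - b i) * Z i \<omega>)^4 - 2 * (\<Sum>i<n. a i * Z i \<omega>)^4 - 2 * (\<Sum>i<n. b i * Z i \<omega>)^4) / 12)"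
    using id unfolding A_def B_def by auto
  show "integrable P (\<lambda>\<omega>. (\<Sum>i<n. a i * Z i \<omega>)^2 * (\<Sum>i<n. b i * Z i \<omega>)^2)"
    unfolding idf using i1 i2 i3 i4 by auto
  have "(\<integral>\<omega>. (\<Sum>i<n. a i * Z i \<omega>)^2 * (\<Sum>i<n. b i * Z i \<omega>)^2 \<partial>P)
     = (\<integral>\<omega>. ((\<Sum>i<n. (a i + b i) * Z i \<omega>)^4 + (\<Sum>i<n. (a i - b i) * Z i \<omega>)^4 - 2 * (\<Sum>i<n. a i * Z i \<omega>)^4 - 2 * (\<Sum>i<n. b i * Z i \<omega>)^4) / 12 \<partial>P)"
    unfolding idf ..
  also have "\<dots> = (3 * (qf r n (\<lambda>i. a i + b i))^2 + 3 * (qf r n (\<lambda>i. a i - b i))^2 - 6 * (qf r n a)^2 - 6 * (qf r n b)^2) / 12"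
    using i1 i2 i3 i4 lin_m4(2)[of "\<lambda>i. a i + b i"] lin_m4(2)[of "\<lambda>i. a i - b i"] lin_m4(2)[of a] lin_m4(2)[of b]
    by simp
  finally show "(\<integral>\<omega>. (\<Sum>i<n. a i * Z i \<omega>)^2 * (\<Sum>i<n. b i * Z i \<omega>)^2 \<partial>P)
         = (3 * (qf r n (\<lambda>i. a i + b i))^2 + 3 * (qf r n (\<lambda>i. a i - b i))^2 - 6 * (qf r n a)^2 - 6 * (qf r n b)^2) / 12" .
qed

end


definition cvar :: "nat \<Rightarrow> (nat \<Rightarrow> real) \<Rightarrow> real" where
  "cvar n z = (\<Sum>i<n. (z i - sample_mean n z)\<^sup>2)"

definition wv :: "nat \<Rightarrow> nat \<Rightarrow> nat \<Rightarrow> real" where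
  "wv n i k = (if k = i then 1 else 0) - 1 / real n"

lemma dev_lin: "i < n \<Longrightarrow> z i - sample_mean n z = (\<Sum>k<n. wv n i k * z k)"
  unfolding wv_def sample_mean_def
  by (simp add: left_diff_distrib sum_subtractf sum_divide_distrib if_distrib[of "\<lambda>x. x * _"] cong: if_cong)

lemma wv_sum: "i < n \<Longrightarrow> (\<Sum>k<n. wv n i k) = 0"
  unfolding wv_def by (simp add: sum_subtractf)

lemma wv_prod: "i < n \<Longrightarrow> j < n \<Longrightarrow> (\<Sum>k<n. wv n i k * wv n j k) = (if i = j then 1 else 0) - 1 / real n"
proof -
  assume ij: "i < n" "j < n"
  have "(\<Sum>k<n. wv n i k * wv n j k) = (\<Sum>k<n. (if k = i then 1 else 0) * (if k = j then 1 else 0)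
      - (if k = i then 1 else 0) / real n - (if k = j then 1 else 0) / real n + 1 / (real n)^2)"
    unfolding wv_def by (intro sum.cong refl) (simp add: algebra_simps power2_eq_square)
  also have "\<dots> = (if i = j then 1 else 0) - 1 / real n - 1 / real n + real n / (real n)^2"
    using ij by (simp add: sum.distrib sum_subtractf if_distrib[of "\<lambda>x. x * _"] flip: sum_divide_distrib cong: if_cong)
  also have "\<dots> = (if i = j then 1 else 0) - 1 / real n"
    using ij by (simp add: power2_eq_square)
  finally show ?thesis .
qed

lemma sq_sum_pm:
  fixes x y :: "nat \<Rightarrow> real"
  shows "(\<Sum>k<n. (x k + y k)\<^sup>2) = (\<Sum>k<n. x k * x k) + (\<Sum>k<n. y k * y k) + 2 * (\<Sum>k<n. x k * y k)"
  "(\<Sum>k<n. (x k - y k)\<^sup>2) = (\<Sum>k<n. x k * x k) + (\<Sum>k<n. y k * y k) - 2 * (\<Sum>k<n. x k * y k)"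
proof -
  have "(\<Sum>k<n. (x k + y k)\<^sup>2) = (\<Sum>k<n. x k * x k + y k * y k + 2 * (x k * y k))"
    by (intro sum.cong refl) (simp add: power2_eq_square algebra_simps)
  then show "(\<Sum>k<n. (x k + y k)\<^sup>2) = (\<Sum>k<n. x k * x k) + (\<Sum>k<n. y k * y k) + 2 * (\<Sum>k<n. x k * y k)"
    by (simp add: sum.distrib sum_distrib_left)
  have "(\<Sum>k<n. (x k - y k)\<^sup>2) = (\<Sum>k<n. x k * x k + y k * y k - 2 * (x k * y k))"
    by (intro sum.cong refl) (simp add: power2_eq_square algebra_simps)
  then show "(\<Sum>k<n. (x k - y k)\<^sup>2) = (\<Sum>k<n. x k * x k) + (\<Sum>k<n. y k * y k) - 2 * (\<Sum>k<n. x k * y k)"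
    by (simp add: sum.distrib sum_subtractf sum_distrib_left)
qed

lemma qf_wv:
  assumes "i < n" "j < n"
  shows "qf r n (\<lambda>k. wv n i k + wv n j k) = (1 - r) * (2 * (1 - 1 / real n) + 2 * ((if i = j then 1 else 0) - 1 / real n))"
    and "qf r n (\<lambda>k. wv n i k - wv n j k) = (1 - r) * (2 * (1 - 1 / real n) - 2 * ((if i = j then 1 else 0) - 1 / real n))"
    and "qf r n (wv n i) = (1 - r) * (1 - 1 / real n)"
  using assms wv_prod[of i n i] wv_prod[of j n j] wv_prod[of i n j] wv_sum[of i n] wv_sum[of j n]
  by (simp_all add: qf_eq sq_sum_pm sum.distrib sum_subtractf power2_eq_square[symmetric])



lemma cvar_lin: "cvar n z = (\<Sum>i<n. (\<Sum>k<n. wv n i k * z k)\<^sup>2)"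
  unfolding cvar_def by (intro sum.cong refl) (simp add: dev_lin)

lemma gam_sum: "i < n \<Longrightarrow> (\<Sum>j<n. ((if i = j then 1 else 0) - 1 / real n)\<^sup>2) = 1 - 1 / real n"
proof -
  assume i: "i < n"
  have "(\<Sum>j<n. ((if i = j then 1 else 0) - 1 / real n)\<^sup>2) = (\<Sum>j<n. (if i = j then 1 - 2 / real n else 0) + 1 / (real n)\<^sup>2)"
    by (intro sum.cong refl) (auto simp: power2_eq_square field_simps)
  also have "\<dots> = 1 - 2 / real n + real n / (real n)\<^sup>2" using i by (simp add: sum.distrib)
  also have "\<dots> = 1 - 1 / real n" using i by (simp add: power2_eq_square field_simps)
  finally show ?thesis .
qed

lemma polar_id: "(3 * (c * (2 * a + 2 * g))\<^sup>2 + 3 * (c * (2 * a - 2 * g))\<^sup>2 - 6 * (c * a)\<^sup>2 - 6 * (c * a)\<^sup>2) / 12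
   = (c::real)\<^sup>2 * (a\<^sup>2 + 2 * g\<^sup>2)"
  by (simp add: power2_eq_square algebra_simps)

context
  fixes P :: "'a measure" and n :: nat and r :: real and Z :: "nat \<Rightarrow> 'a \<Rightarrow> real"
  assumes P: "prob_space P" and Z: "is_mvn0 P n (equicorr r) Z" and r: "0 < r" "r < 1"
begin

lemmas m2 = lin_m2[OF P Z r] and p22 = lin_prod22[OF P Z r]

lemma cvar_meas[measurable]: "(\<lambda>\<omega>. cvar n (\<lambda>k. Z k \<omega>)) \<in> borel_measurable P"
  unfolding cvar_lin using lin_meas[OF P Z r] by measurable

lemma EV: assumes "0 < n"
  shows "integrable P (\<lambda>\<omega>. cvar n (\<lambda>k. Z k \<omega>))" "(\<integral>\<omega>. cvar n (\<lambda>k. Z k \<omega>) \<partial>P) = (1 - r) * (real n - 1)"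
proof -
  show "integrable P (\<lambda>\<omega>. cvar n (\<lambda>k. Z k \<omega>))" unfolding cvar_lin using m2(1) by auto
  have "(\<integral>\<omega>. cvar n (\<lambda>k. Z k \<omega>) \<partial>P) = (\<Sum>i<n. \<integral>\<omega>. (\<Sum>k<n. wv n i k * Z k \<omega>)\<^sup>2 \<partial>P)"
    unfolding cvar_lin by (rule Bochner_Integration.integral_sum) (use m2(1) in auto)
  also have "\<dots> = (\<Sum>i<n. (1 - r) * (1 - 1 / real n))"
    by (intro sum.cong refl) (simp add: m2(2) qf_wv(3))
  also have "\<dots> = (1 - r) * (real n - 1)" using assms by (simp add: field_simps)
  finally show "(\<integral>\<omega>. cvar n (\<lambda>k. Z k \<omega>) \<partial>P) = (1 - r) * (real n - 1)" .
qed

lemma EV2: assumes "0 < n"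
  shows "integrable P (\<lambda>\<omega>. (cvar n (\<lambda>k. Z k \<omega>))\<^sup>2)"
    "(\<integral>\<omega>. (cvar n (\<lambda>k. Z k \<omega>))\<^sup>2 \<partial>P) = (1 - r)\<^sup>2 * ((real n - 1)\<^sup>2 + 2 * (real n - 1))"
proof -
  have sq: "(cvar n (\<lambda>k. Z k \<omega>))\<^sup>2 = (\<Sum>i<n. \<Sum>j<n. (\<Sum>k<n. wv n i k * Z k \<omega>)\<^sup>2 * (\<Sum>k<n. wv n j k * Z k \<omega>)\<^sup>2)" for \<omega>
    unfolding cvar_lin by (simp add: power2_eq_square sum_product)
  show "integrable P (\<lambda>\<omega>. (cvar n (\<lambda>k. Z k \<omega>))\<^sup>2)" unfolding sq using p22(1) by auto
  have "(\<integral>\<omega>. (cvar n (\<lambda>k. Z k \<omega>))\<^sup>2 \<partial>P) = (\<Sum>i<n. \<Sum>j<n. \<integral>\<omega>. (\<Sum>k<n. wv n i k * Z k \<omega>)\<^sup>2 * (\<Sum>k<n. wv n j k * Z k \<omega>)\<^sup>2 \<partial>P)"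
  proof -
    have "(\<integral>\<omega>. (\<Sum>i<n. \<Sum>j<n. (\<Sum>k<n. wv n i k * Z k \<omega>)\<^sup>2 * (\<Sum>k<n. wv n j k * Z k \<omega>)\<^sup>2) \<partial>P)
       = (\<Sum>i<n. \<integral>\<omega>. (\<Sum>j<n. (\<Sum>k<n. wv n i k * Z k \<omega>)\<^sup>2 * (\<Sum>k<n. wv n j k * Z k \<omega>)\<^sup>2) \<partial>P)"
      by (rule Bochner_Integration.integral_sum) (use p22(1) in auto)
    also have "\<dots> = (\<Sum>i<n. \<Sum>j<n. \<integral>\<omega>. (\<Sum>k<n. wv n i k * Z k \<omega>)\<^sup>2 * (\<Sum>k<n. wv n j k * Z k \<omega>)\<^sup>2 \<partial>P)"
      by (intro sum.cong refl Bochner_Integration.integral_sum) (use p22(1) in auto)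
    finally show ?thesis by (simp only: sq)
  qed
  also have "\<dots> = (\<Sum>i<n. \<Sum>j<n. (1 - r)\<^sup>2 * ((1 - 1 / real n)\<^sup>2 + 2 * ((if i = j then 1 else 0) - 1 / real n)\<^sup>2))"
  proof (intro sum.cong refl)
    fix i j assume "i \<in> {..<n}" "j \<in> {..<n}"
    then have ij: "i < n" "j < n" by auto
    show "(\<integral>\<omega>. (\<Sum>k<n. wv n i k * Z k \<omega>)\<^sup>2 * (\<Sum>k<n. wv n j k * Z k \<omega>)\<^sup>2 \<partial>P) =
      (1 - r)\<^sup>2 * ((1 - 1 / real n)\<^sup>2 + 2 * ((if i = j then 1 else 0) - 1 / real n)\<^sup>2)"
      unfolding p22(2) qf_wv[OF ij] qf_wv(3)[OF ij(2) ij(2)] by (rule polar_id)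
  qed
  also have "\<dots> = (\<Sum>i<n. (1 - r)\<^sup>2 * ((real n) * (1 - 1 / real n)\<^sup>2 + 2 * (1 - 1 / real n)))"
  proof (intro sum.cong refl)
    fix i assume "i \<in> {..<n}"
    then have i: "i < n" by simp
    have "(\<Sum>j<n. (1 - r)\<^sup>2 * ((1 - 1 / real n)\<^sup>2 + 2 * ((if i = j then 1 else 0) - 1 / real n)\<^sup>2))
      = (1 - r)\<^sup>2 * ((real n) * (1 - 1 / real n)\<^sup>2 + 2 * (\<Sum>j<n. ((if i = j then 1 else 0) - 1 / real n)\<^sup>2))"
      by (simp add: sum.distrib sum_distrib_left[symmetric])
    then show "(\<Sum>j<n. (1 - r)\<^sup>2 * ((1 - 1 / real n)\<^sup>2 + 2 * ((if i = j then 1 else 0) - 1 / real n)\<^sup>2))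
      = (1 - r)\<^sup>2 * ((real n) * (1 - 1 / real n)\<^sup>2 + 2 * (1 - 1 / real n))"
      using gam_sum[OF i] by simp
  qed
  also have "\<dots> = (1 - r)\<^sup>2 * ((real n - 1)\<^sup>2 + 2 * (real n - 1))"
    using assms by (simp add: power2_eq_square field_simps)
  finally show "(\<integral>\<omega>. (cvar n (\<lambda>k. Z k \<omega>))\<^sup>2 \<partial>P) = (1 - r)\<^sup>2 * ((real n - 1)\<^sup>2 + 2 * (real n - 1))" .
qed

lemma EVdev: assumes "0 < n"
  shows "integrable P (\<lambda>\<omega>. (cvar n (\<lambda>k. Z k \<omega>) / real n - (1 - r))\<^sup>2)"
    "(\<integral>\<omega>. (cvar n (\<lambda>k. Z k \<omega>) / real n - (1 - r))\<^sup>2 \<partial>P) = (1 - r)\<^sup>2 * (2 * real n - 1) / (real n)\<^sup>2"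
proof -
  interpret prob_space P by (rule P)
  have eq: "(cvar n (\<lambda>k. Z k \<omega>) / real n - (1 - r))\<^sup>2 =
     (cvar n (\<lambda>k. Z k \<omega>))\<^sup>2 / (real n)\<^sup>2 - (2 * (1 - r) / real n) * cvar n (\<lambda>k. Z k \<omega>) + (1 - r)\<^sup>2" for \<omega>
    using assms by (simp add: power2_eq_square field_simps)
  show "integrable P (\<lambda>\<omega>. (cvar n (\<lambda>k. Z k \<omega>) / real n - (1 - r))\<^sup>2)"
    unfolding eq using EV(1)[OF assms] EV2(1)[OF assms] by auto
  have "(\<integral>\<omega>. (cvar n (\<lambda>k. Z k \<omega>) / real n - (1 - r))\<^sup>2 \<partial>P) =
     (\<integral>\<omega>. (cvar n (\<lambda>k. Z k \<omega>))\<^sup>2 \<partial>P) / (real n)\<^sup>2 - (2 * (1 - r) / real n) * (\<integral>\<omega>. cvar n (\<lambda>k. Z k \<omega>) \<partial>P) + (1 - r)\<^sup>2"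
    unfolding eq using EV(1)[OF assms] EV2(1)[OF assms] by (simp add: prob_space)
  also have "\<dots> = (1 - r)\<^sup>2 * (2 * real n - 1) / (real n)\<^sup>2"
    unfolding EV(2)[OF assms] EV2(2)[OF assms] using assms by (simp add: power2_eq_square field_simps)
  finally show "(\<integral>\<omega>. (cvar n (\<lambda>k. Z k \<omega>) / real n - (1 - r))\<^sup>2 \<partial>P) = (1 - r)\<^sup>2 * (2 * real n - 1) / (real n)\<^sup>2" .
qed

end


definition cw :: "nat \<Rightarrow> (nat \<Rightarrow> real) \<Rightarrow> nat \<Rightarrow> real" where
  "cw n y i = (y i - sample_mean n y) / sqrt (real n)"

lemma sample_mean_cong: "(\<And>i. i < n \<Longrightarrow> x i = x' i) \<Longrightarrow> sample_mean n x = sample_mean n x'"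
  unfolding sample_mean_def by (intro arg_cong2[where f="(/)"] sum.cong) auto

lemma dev_sum0: "(\<Sum>i<n. y i - sample_mean n y) = (0::real)"
  by (cases "n = 0") (auto simp: sample_mean_def sum_subtractf)

lemma cw_sum0: "(\<Sum>i<n. cw n y i) = 0"
  unfolding cw_def using dev_sum0[where n=n and y=y] by (simp flip: sum_divide_distrib)

lemma qf_cw: "qf r n (cw n y) = (1 - r) * cvar n y / real n"
  unfolding qf_eq cw_sum0 cvar_def cw_def
  by (simp add: power_divide flip: sum_divide_distrib)

lemma cov_lin: "sqrt (real n) * sample_cov n x y = (\<Sum>i<n. cw n y i * x i)"
proof -
  have "(\<Sum>i<n. (x i - sample_mean n x) * (y i - sample_mean n y)) = (\<Sum>i<n. x i * (y i - sample_mean n y)) - sample_mean n x * (\<Sum>i<n. y i - sample_mean n y)"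
  proof -
    have "(\<Sum>i<n. (x i - sample_mean n x) * (y i - sample_mean n y)) = (\<Sum>i<n. x i * (y i - sample_mean n y) - sample_mean n x * (y i - sample_mean n y))"
      by (intro sum.cong refl) (simp add: algebra_simps)
    then show ?thesis by (simp only: sum_subtractf sum_distrib_left[symmetric])
  qed
  also have "\<dots> = (\<Sum>i<n. x i * (y i - sample_mean n y))" by (simp add: dev_sum0)
  finally have e: "(\<Sum>i<n. (x i - sample_mean n x) * (y i - sample_mean n y)) = (\<Sum>i<n. x i * (y i - sample_mean n y))" .
  have s: "sqrt (real n) / real n = 1 / sqrt (real n)"
    by (cases "n = 0") (auto simp: field_simps real_sqrt_divide[symmetric] real_div_sqrt)
  have "sqrt (real n) * sample_cov n x y = (sqrt (real n) / real n) * (\<Sum>i<n. x i * (y i - sample_mean n y))"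
    unfolding sample_cov_def e by simp
  also have "\<dots> = (\<Sum>i<n. x i * (y i - sample_mean n y)) / sqrt (real n)" unfolding s by simp
  also have "\<dots> = (\<Sum>i<n. cw n y i * x i)" unfolding cw_def sum_divide_distrib by (simp add: ac_simps)
  finally show ?thesis .
qed



abbreviation "PI n \<equiv> PiM {..<n} (\<lambda>_. borel :: real measure)"

lemma F_meas[measurable]: "(\<lambda>(x, y). iexp (t * (\<Sum>i<n. cw n y i * x i))) \<in> borel_measurable (PI n \<Otimes>\<^sub>M PI n)"
  unfolding cw_def sample_mean_def by measurable

lemma F2_meas[measurable]: "(\<lambda>(x, y). ennreal ((\<Sum>i<n. cw n y i * x i)\<^sup>2)) \<in> borel_measurable (PI n \<Otimes>\<^sub>M PI n)"
  unfolding cw_def sample_mean_def by measurable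

context
  fixes P :: "'a measure" and n :: nat and X Y :: "nat \<Rightarrow> 'a \<Rightarrow> real"
  assumes P: "prob_space P"
    and indep: "prob_space.indep_var P (PI n) (\<lambda>\<omega>. \<lambda>i\<in>{..<n}. X i \<omega>) (PI n) (\<lambda>\<omega>. \<lambda>i\<in>{..<n}. Y i \<omega>)"
begin

interpretation prob_space P by (rule P)

lemma rvs: "random_variable (PI n) (\<lambda>\<omega>. \<lambda>i\<in>{..<n}. X i \<omega>)" "random_variable (PI n) (\<lambda>\<omega>. \<lambda>i\<in>{..<n}. Y i \<omega>)"
  and joint: "distr P (PI n) (\<lambda>\<omega>. \<lambda>i\<in>{..<n}. X i \<omega>) \<Otimes>\<^sub>M distr P (PI n) (\<lambda>\<omega>. \<lambda>i\<in>{..<n}. Y i \<omega>)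
     = distr P (PI n \<Otimes>\<^sub>M PI n) (\<lambda>\<omega>. (\<lambda>i\<in>{..<n}. X i \<omega>, \<lambda>i\<in>{..<n}. Y i \<omega>))"
  using indep unfolding indep_var_distribution_eq by auto

lemma cond_integral:
  fixes F :: "(nat \<Rightarrow> real) \<Rightarrow> (nat \<Rightarrow> real) \<Rightarrow> complex"
  assumes Fm[measurable]: "(\<lambda>(x, y). F x y) \<in> borel_measurable (PI n \<Otimes>\<^sub>M PI n)"
    and Fb: "\<And>x y. norm (F x y) \<le> 1"
  shows "(\<integral>\<omega>. F (\<lambda>i\<in>{..<n}. X i \<omega>) (\<lambda>i\<in>{..<n}. Y i \<omega>) \<partial>P)
       = (\<integral>\<omega>. (\<integral>\<omega>'. F (\<lambda>i\<in>{..<n}. X i \<omega>') (\<lambda>i\<in>{..<n}. Y i \<omega>) \<partial>P) \<partial>P)"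
proof -
  note rvs[measurable]
  define PX where "PX = distr P (PI n) (\<lambda>\<omega>. \<lambda>i\<in>{..<n}. X i \<omega>)"
  define PY where "PY = distr P (PI n) (\<lambda>\<omega>. \<lambda>i\<in>{..<n}. Y i \<omega>)"
  interpret PX: prob_space PX unfolding PX_def by (rule prob_space_distr) (rule rvs)
  interpret PY: prob_space PY unfolding PY_def by (rule prob_space_distr) (rule rvs)
  interpret PXY: pair_sigma_finite PX PY ..
  interpret PXY': pair_prob_space PX PY ..
  have [simp]: "sets PX = sets (PI n)" "sets PY = sets (PI n)" unfolding PX_def PY_def by auto
  have [measurable]: "(\<lambda>(x, y). F x y) \<in> borel_measurable (PX \<Otimes>\<^sub>M PY)"
    using Fm by (simp cong: measurable_cong_sets)
  have int: "integrable (PX \<Otimes>\<^sub>M PY) (\<lambda>(x, y). F x y)"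
    by (rule PXY'.integrable_const_bound[where B=1]) (auto simp: Fb split: prod.splits)
  have "(\<integral>\<omega>. F (\<lambda>i\<in>{..<n}. X i \<omega>) (\<lambda>i\<in>{..<n}. Y i \<omega>) \<partial>P)
      = (\<integral>z. (\<lambda>(x, y). F x y) z \<partial>distr P (PI n \<Otimes>\<^sub>M PI n) (\<lambda>\<omega>. (\<lambda>i\<in>{..<n}. X i \<omega>, \<lambda>i\<in>{..<n}. Y i \<omega>)))"
    by (subst integral_distr) auto
  also have "\<dots> = (\<integral>z. (\<lambda>(x, y). F x y) z \<partial>(PX \<Otimes>\<^sub>M PY))"
    unfolding PX_def PY_def joint ..
  also have "\<dots> = (\<integral>y. (\<integral>x. F x y \<partial>PX) \<partial>PY)"
    by (rule PXY.integral_snd[symmetric]) (rule int)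
  also have "\<dots> = (\<integral>y. (\<integral>\<omega>'. F (\<lambda>i\<in>{..<n}. X i \<omega>') y \<partial>P) \<partial>PY)"
    unfolding PX_def
    by (intro Bochner_Integration.integral_cong refl, subst integral_distr)
       (auto simp: PY_def measurable_Pair2[OF Fm[unfolded case_prod_beta']])
  also have "\<dots> = (\<integral>\<omega>. (\<integral>\<omega>'. F (\<lambda>i\<in>{..<n}. X i \<omega>') (\<lambda>i\<in>{..<n}. Y i \<omega>) \<partial>P) \<partial>P)"
    unfolding PY_def by (subst integral_distr) auto
  finally show ?thesis .
qed

lemma cond_nn:
  fixes F :: "(nat \<Rightarrow> real) \<Rightarrow> (nat \<Rightarrow> real) \<Rightarrow> ennreal"
  assumes Fm[measurable]: "(\<lambda>(x, y). F x y) \<in> borel_measurable (PI n \<Otimes>\<^sub>M PI n)"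
  shows "(\<integral>\<^sup>+\<omega>. F (\<lambda>i\<in>{..<n}. X i \<omega>) (\<lambda>i\<in>{..<n}. Y i \<omega>) \<partial>P)
       = (\<integral>\<^sup>+\<omega>. (\<integral>\<^sup>+\<omega>'. F (\<lambda>i\<in>{..<n}. X i \<omega>') (\<lambda>i\<in>{..<n}. Y i \<omega>) \<partial>P) \<partial>P)"
proof -
  note rvs[measurable]
  define PX where "PX = distr P (PI n) (\<lambda>\<omega>. \<lambda>i\<in>{..<n}. X i \<omega>)"
  define PY where "PY = distr P (PI n) (\<lambda>\<omega>. \<lambda>i\<in>{..<n}. Y i \<omega>)"
  interpret PX: prob_space PX unfolding PX_def by (rule prob_space_distr) (rule rvs)
  interpret PY: prob_space PY unfolding PY_def by (rule prob_space_distr) (rule rvs)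
  interpret PXY: pair_sigma_finite PX PY ..
  have [simp]: "sets PX = sets (PI n)" "sets PY = sets (PI n)" unfolding PX_def PY_def by auto
  have [measurable]: "(\<lambda>(x, y). F x y) \<in> borel_measurable (PX \<Otimes>\<^sub>M PY)"
    using Fm by (simp cong: measurable_cong_sets)
  have "(\<integral>\<^sup>+\<omega>. F (\<lambda>i\<in>{..<n}. X i \<omega>) (\<lambda>i\<in>{..<n}. Y i \<omega>) \<partial>P)
      = (\<integral>\<^sup>+z. (\<lambda>(x, y). F x y) z \<partial>distr P (PI n \<Otimes>\<^sub>M PI n) (\<lambda>\<omega>. (\<lambda>i\<in>{..<n}. X i \<omega>, \<lambda>i\<in>{..<n}. Y i \<omega>)))"
    by (subst nn_integral_distr) auto
  also have "\<dots> = (\<integral>\<^sup>+z. (\<lambda>(x, y). F x y) z \<partial>(PX \<Otimes>\<^sub>M PY))"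
    unfolding PX_def PY_def joint ..
  also have "\<dots> = (\<integral>\<^sup>+y. (\<integral>\<^sup>+x. F x y \<partial>PX) \<partial>PY)"
    using PXY.nn_integral_snd[of "\<lambda>(x, y). F x y"] by simp
  also have "\<dots> = (\<integral>\<^sup>+y. (\<integral>\<^sup>+\<omega>'. F (\<lambda>i\<in>{..<n}. X i \<omega>') y \<partial>P) \<partial>PY)"
    unfolding PX_def
    by (intro nn_integral_cong, subst nn_integral_distr)
       (auto simp: PY_def measurable_Pair2[OF Fm[unfolded case_prod_beta']])
  also have "\<dots> = (\<integral>\<^sup>+\<omega>. (\<integral>\<^sup>+\<omega>'. F (\<lambda>i\<in>{..<n}. X i \<omega>') (\<lambda>i\<in>{..<n}. Y i \<omega>) \<partial>P) \<partial>P)"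
    unfolding PY_def by (subst nn_integral_distr) auto
  finally show ?thesis .
qed

end


lemma cw_restrict: "i < n \<Longrightarrow> cw n (\<lambda>j\<in>{..<n}. y j) i = cw n y i"
  unfolding cw_def by (simp add: sample_mean_cong[of n "\<lambda>j\<in>{..<n}. y j" y])

lemma cvar_restrict: "cvar n (\<lambda>j\<in>{..<n}. y j) = cvar n y"
  unfolding cvar_def by (intro sum.cong refl) (simp add: sample_mean_cong[of n "\<lambda>j\<in>{..<n}. y j" y])

lemma lin_restrict: "(\<Sum>i<n. cw n (\<lambda>j\<in>{..<n}. y j) i * (\<lambda>j\<in>{..<n}. x j) i) = (\<Sum>i<n. cw n y i * x i)"
  by (intro sum.cong refl) (simp add: cw_restrict)

context
  fixes P :: "'a measure" and n :: nat and r :: real and X Y :: "nat \<Rightarrow> 'a \<Rightarrow> real"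
  assumes P: "prob_space P" and r: "0 < r" "r < 1"
    and normX: "is_mvn0 P n (equicorr r) X" and normY: "is_mvn0 P n (equicorr r) Y"
    and indep: "prob_space.indep_var P (PI n) (\<lambda>\<omega>. \<lambda>i\<in>{..<n}. X i \<omega>) (PI n) (\<lambda>\<omega>. \<lambda>i\<in>{..<n}. Y i \<omega>)"
begin

interpretation prob_space P by (rule P)

lemma Xm[measurable]: "i < n \<Longrightarrow> X i \<in> borel_measurable P" and Ym[measurable]: "i < n \<Longrightarrow> Y i \<in> borel_measurable P"
  using normX normY unfolding is_mvn0_def by auto

definition "Acov \<omega> = sqrt (real n) * sample_cov n (\<lambda>i. X i \<omega>) (\<lambda>i. Y i \<omega>)"

lemma Acov_lin: "Acov \<omega> = (\<Sum>i<n. cw n (\<lambda>i. Y i \<omega>) i * X i \<omega>)"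
  unfolding Acov_def cov_lin ..

lemma Acov_meas[measurable]: "Acov \<in> borel_measurable P"
  unfolding Acov_lin[abs_def] cw_def sample_mean_def by measurable

lemma charA: "char (distr P borel Acov) t = (\<integral>\<omega>. complex_of_real (exp (- (t\<^sup>2 * ((1 - r) * cvar n (\<lambda>i. Y i \<omega>) / real n)) / 2)) \<partial>P)"
proof -
  have "char (distr P borel Acov) t = (\<integral>\<omega>. iexp (t * Acov \<omega>) \<partial>P)"
    unfolding char_def by (subst integral_distr) auto
  also have "\<dots> = (\<integral>\<omega>. (\<lambda>x y. iexp (t * (\<Sum>i<n. cw n y i * x i))) (\<lambda>i\<in>{..<n}. X i \<omega>) (\<lambda>i\<in>{..<n}. Y i \<omega>) \<partial>P)"
    unfolding Acov_lin lin_restrict ..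
  also have "\<dots> = (\<integral>\<omega>. (\<integral>\<omega>'. (\<lambda>x y. iexp (t * (\<Sum>i<n. cw n y i * x i))) (\<lambda>i\<in>{..<n}. X i \<omega>') (\<lambda>i\<in>{..<n}. Y i \<omega>) \<partial>P) \<partial>P)"
    by (rule cond_integral[OF P indep], rule F_meas, simp add: norm_exp_i_times)
  also have "\<dots> = (\<integral>\<omega>. complex_of_real (exp (- (t\<^sup>2 * ((1 - r) * cvar n (\<lambda>i. Y i \<omega>) / real n)) / 2)) \<partial>P)"
  proof (intro Bochner_Integration.integral_cong refl)
    fix \<omega>
    have "(\<integral>\<omega>'. (\<lambda>x y. iexp (t * (\<Sum>i<n. cw n y i * x i))) (\<lambda>i\<in>{..<n}. X i \<omega>') (\<lambda>i\<in>{..<n}. Y i \<omega>) \<partial>P)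
      = (\<integral>\<omega>'. iexp (t * (\<Sum>i<n. cw n (\<lambda>i. Y i \<omega>) i * X i \<omega>')) \<partial>P)"
      by (simp only: lin_restrict)
    also have "\<dots> = complex_of_real (exp (- (t\<^sup>2 * qf r n (cw n (\<lambda>i. Y i \<omega>))) / 2))"
      by (rule lin_char[OF P normX r])
    finally show "(\<integral>\<omega>'. (\<lambda>x y. iexp (t * (\<Sum>i<n. cw n y i * x i))) (\<lambda>i\<in>{..<n}. X i \<omega>') (\<lambda>i\<in>{..<n}. Y i \<omega>) \<partial>P)
      = complex_of_real (exp (- (t\<^sup>2 * ((1 - r) * cvar n (\<lambda>i. Y i \<omega>) / real n)) / 2))"
      by (simp add: qf_cw)
  qed
  finally show ?thesis .
qed

lemma EA2: assumes n: "0 < n"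
  shows "integrable P (\<lambda>\<omega>. (Acov \<omega>)\<^sup>2)" "(\<integral>\<omega>. (Acov \<omega>)\<^sup>2 \<partial>P) \<le> (1 - r)\<^sup>2"
proof -
  have "(\<integral>\<^sup>+\<omega>. ennreal ((Acov \<omega>)\<^sup>2) \<partial>P) = (\<integral>\<^sup>+\<omega>. (\<lambda>x y. ennreal ((\<Sum>i<n. cw n y i * x i)\<^sup>2)) (\<lambda>i\<in>{..<n}. X i \<omega>) (\<lambda>i\<in>{..<n}. Y i \<omega>) \<partial>P)"
    unfolding Acov_lin lin_restrict ..
  also have "\<dots> = (\<integral>\<^sup>+\<omega>. (\<integral>\<^sup>+\<omega>'. (\<lambda>x y. ennreal ((\<Sum>i<n. cw n y i * x i)\<^sup>2)) (\<lambda>i\<in>{..<n}. X i \<omega>') (\<lambda>i\<in>{..<n}. Y i \<omega>) \<partial>P) \<partial>P)"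
    by (rule cond_nn[OF P indep]) auto
  also have "\<dots> = (\<integral>\<^sup>+\<omega>. ennreal ((1 - r) * cvar n (\<lambda>i. Y i \<omega>) / real n) \<partial>P)"
  proof (intro nn_integral_cong)
    fix \<omega>
    have "(\<integral>\<^sup>+\<omega>'. (\<lambda>x y. ennreal ((\<Sum>i<n. cw n y i * x i)\<^sup>2)) (\<lambda>i\<in>{..<n}. X i \<omega>') (\<lambda>i\<in>{..<n}. Y i \<omega>) \<partial>P)
      = (\<integral>\<^sup>+\<omega>'. ennreal ((\<Sum>i<n. cw n (\<lambda>i. Y i \<omega>) i * X i \<omega>')\<^sup>2) \<partial>P)"
      by (simp only: lin_restrict)
    also have "\<dots> = ennreal (qf r n (cw n (\<lambda>i. Y i \<omega>)))"
      by (rule lin_nn2[OF P normX r])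
    finally show "(\<integral>\<^sup>+\<omega>'. (\<lambda>x y. ennreal ((\<Sum>i<n. cw n y i * x i)\<^sup>2)) (\<lambda>i\<in>{..<n}. X i \<omega>') (\<lambda>i\<in>{..<n}. Y i \<omega>) \<partial>P)
      = ennreal ((1 - r) * cvar n (\<lambda>i. Y i \<omega>) / real n)"
      by (simp add: qf_cw)
  qed
  also have "\<dots> = ennreal (\<integral>\<omega>. (1 - r) * cvar n (\<lambda>i. Y i \<omega>) / real n \<partial>P)"
    using EV(1)[OF P normY r n] r
    by (intro nn_integral_eq_integral) (auto simp: cvar_def intro!: divide_nonneg_nonneg mult_nonneg_nonneg sum_nonneg)
  also have "\<dots> = ennreal ((1 - r) * ((1 - r) * (real n - 1)) / real n)"
    using EV(1)[OF P normY r n] by (simp add: EV(2)[OF P normY r n])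
  finally have nn: "(\<integral>\<^sup>+\<omega>. ennreal ((Acov \<omega>)\<^sup>2) \<partial>P) = ennreal ((1 - r) * ((1 - r) * (real n - 1)) / real n)" .
  show int: "integrable P (\<lambda>\<omega>. (Acov \<omega>)\<^sup>2)"
    by (rule integrableI_bounded) (auto simp: nn)
  have "(\<integral>\<omega>. (Acov \<omega>)\<^sup>2 \<partial>P) = (1 - r) * ((1 - r) * (real n - 1)) / real n"
    using nn int r n by (subst (asm) nn_integral_eq_integral) (auto simp: mult_nonneg_nonneg)
  also have "\<dots> = (1 - r)\<^sup>2 * ((real n - 1) / real n)" by (simp add: power2_eq_square)
  also have "\<dots> \<le> (1 - r)\<^sup>2 * 1"
    using n by (intro mult_left_mono) auto
  also have "\<dots> = (1 - r)\<^sup>2" by simp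
  finally show "(\<integral>\<omega>. (Acov \<omega>)\<^sup>2 \<partial>P) \<le> (1 - r)\<^sup>2" .
qed

end


lemma exp_neg_diff: fixes x y :: real assumes "0 \<le> x" "0 \<le> y" shows "\<bar>exp (- x) - exp (- y)\<bar> \<le> \<bar>x - y\<bar>"
proof -
  have *: "exp (- a) - exp (- b) \<le> b - a" if "0 \<le> a" "a \<le> b" for a b :: real
  proof -
    have "exp (- a) - exp (- b) = exp (- a) * (1 - exp (- (b - a)))" by (simp add: algebra_simps flip: exp_add)
    also have "\<dots> \<le> 1 * (b - a)"
    proof (rule mult_mono)
      show "exp (- a) \<le> 1" using that by simp
      show "1 - exp (- (b - a)) \<le> b - a" using exp_ge_add_one_self[of "- (b - a)"] by linarith
      show "0 \<le> 1 - exp (- (b - a))" using that by simp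
    qed simp
    finally show ?thesis by simp
  qed
  show ?thesis
  proof (cases "x \<le> y")
    case True then show ?thesis using *[of x y] assms by (simp add: abs_le_iff)
  next
    case False then show ?thesis using *[of y x] assms by (simp add: abs_le_iff)
  qed
qed

lemma iexp_diff_le: "norm (iexp u - iexp v) \<le> \<bar>u - v\<bar>"
proof -
  have "iexp u - iexp v = iexp v * (iexp (u - v) - 1)"
    by (simp add: algebra_simps flip: exp_add)
  then have "norm (iexp u - iexp v) = norm (iexp (u - v) - 1)" by (simp add: norm_mult norm_exp_i_times)
  also have "\<dots> \<le> \<bar>u - v\<bar>" using iexp_approx1[of "u - v" 0] by simp
  finally show ?thesis .
qed

lemma iexp_diff_le2: "norm (iexp u - iexp v) \<le> 2"
proof -
  have "norm (iexp u - iexp v) \<le> norm (iexp u) + norm (iexp v)" by (rule norm_triangle_ineq4)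
  then show ?thesis by (simp add: norm_exp_i_times)
qed

lemma abs_le_l2: "0 < d \<Longrightarrow> \<bar>z::real\<bar> \<le> d + z\<^sup>2 / d"
proof -
  assume d: "0 < d"
  show ?thesis
  proof (cases "\<bar>z\<bar> \<le> d")
    case True then show ?thesis using d by (simp add: add_increasing2)
  next
    case False
    then have "\<bar>z\<bar> * d \<le> \<bar>z\<bar> * \<bar>z\<bar>" by (intro mult_left_mono) auto
    then have "\<bar>z\<bar> \<le> z\<^sup>2 / d" using d by (simp add: field_simps power2_eq_square abs_mult_self_eq)
    then show ?thesis using d by simp
  qed
qed

lemma ratio_bound:
  fixes a b c d t A :: real
  assumes a: "0 \<le> a" and b: "0 \<le> b" and c: "0 < c" and d: "0 < d" "d \<le> c / 2"
  shows "norm (iexp (t * (A / sqrt (a * b))) - iexp (t * (A / c))) \<le> \<bar>t\<bar> * (2 * d / c\<^sup>2) * (1 + A\<^sup>2) + 2 * ((a - c)\<^sup>2 + (b - c)\<^sup>2) / d\<^sup>2"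
proof (cases "\<bar>a - c\<bar> \<le> d \<and> \<bar>b - c\<bar> \<le> d")
  case True
  have "(c - d)\<^sup>2 \<le> a * b"
  proof -
    have "(c - d)\<^sup>2 = (c - d) * (c - d)" by (simp add: power2_eq_square)
    also have "\<dots> \<le> a * b" using True d by (intro mult_mono) auto
    finally show ?thesis .
  qed
  then have lo: "c - d \<le> sqrt (a * b)" using d real_le_rsqrt by auto
  have "a * b \<le> (c + d)\<^sup>2"
  proof -
    have "a * b \<le> (c + d) * (c + d)" using True d a b by (intro mult_mono) auto
    then show ?thesis by (simp add: power2_eq_square)
  qed
  note real_sqrt_le_mono[OF this]
  then have hi: "sqrt (a * b) \<le> c + d" using c d by simp
  define w where "w = sqrt (a * b)"
  have wpos: "c / 2 \<le> w" using lo d unfolding w_def by simp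
  have "\<bar>1 / w - 1 / c\<bar> = \<bar>c - w\<bar> / (w * c)" using wpos c by (simp add: field_simps abs_div)
  also have "\<dots> \<le> d / ((c / 2) * c)"
  proof (rule frac_le)
    show "\<bar>c - w\<bar> \<le> d" using lo hi unfolding w_def by simp
    show "0 < c / 2 * c" using c by simp
    show "c / 2 * c \<le> w * c" using wpos c by (intro mult_right_mono) auto
  qed (use d in auto)
  also have "\<dots> = 2 * d / c\<^sup>2" by (simp add: power2_eq_square)
  finally have D: "\<bar>1 / w - 1 / c\<bar> \<le> 2 * d / c\<^sup>2" .
  have "norm (iexp (t * (A / w)) - iexp (t * (A / c))) \<le> \<bar>t * (A / w) - t * (A / c)\<bar>" by (rule iexp_diff_le)
  also have "\<dots> = \<bar>t * A * (1 / w - 1 / c)\<bar>" by (simp add: algebra_simps)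
  also have "\<dots> = \<bar>t\<bar> * \<bar>A\<bar> * \<bar>1 / w - 1 / c\<bar>" by (simp add: abs_mult)
  also have "\<dots> \<le> \<bar>t\<bar> * (1 + A\<^sup>2) * (2 * d / c\<^sup>2)"
  proof (intro mult_mono mult_left_mono D)
    show "\<bar>A\<bar> \<le> 1 + A\<^sup>2" using abs_le_l2[of 1 A] by simp
  qed auto
  also have "\<dots> \<le> \<bar>t\<bar> * (2 * d / c\<^sup>2) * (1 + A\<^sup>2) + 2 * ((a - c)\<^sup>2 + (b - c)\<^sup>2) / d\<^sup>2"
    by (simp add: ac_simps)
  finally show ?thesis unfolding w_def .
next
  case False
  have "d\<^sup>2 \<le> (a - c)\<^sup>2 + (b - c)\<^sup>2"
  proof (cases "\<bar>a - c\<bar> \<le> d")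
    case True
    then have "\<not> \<bar>b - c\<bar> \<le> d" using False by auto
    then have "d\<^sup>2 \<le> (b - c)\<^sup>2" using abs_le_square_iff[of d "b - c"] d by simp
    then show ?thesis using zero_le_power2[of "a - c"] by linarith
  next
    case False
    then have "d\<^sup>2 \<le> (a - c)\<^sup>2" using abs_le_square_iff[of d "a - c"] d by simp
    then show ?thesis using zero_le_power2[of "b - c"] by linarith
  qed
  then have "2 \<le> 2 * ((a - c)\<^sup>2 + (b - c)\<^sup>2) / d\<^sup>2" using d by (simp add: field_simps)
  moreover have "0 \<le> \<bar>t\<bar> * (2 * d / c\<^sup>2) * (1 + A\<^sup>2)" using d c by simp
  ultimately show ?thesis using iexp_diff_le2[of "t * (A / sqrt (a * b))" "t * (A / c)"] by linarith
qed



lemma corr_ratio: "0 < n \<Longrightarrow> sqrt (real n) * sample_corr n x y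
   = (sqrt (real n) * sample_cov n x y) / sqrt ((cvar n x / real n) * (cvar n y / real n))"
proof -
  assume n: "0 < n"
  define S where "S = (\<Sum>i<n. (x i - sample_mean n x) * (y i - sample_mean n y))"
  have "sqrt ((cvar n x / real n) * (cvar n y / real n)) = sqrt (cvar n x) * sqrt (cvar n y) / real n"
    using n by (simp add: real_sqrt_mult real_sqrt_divide)
  then show ?thesis
    unfolding sample_corr_def sample_cov_def S_def[symmetric] cvar_def[symmetric]
    using n by (cases "sqrt (cvar n x) * sqrt (cvar n y) = 0") (auto simp: field_simps)
qed

context
  fixes P :: "'a measure" and n :: nat and r :: real and X Y :: "nat \<Rightarrow> 'a \<Rightarrow> real"
  assumes P: "prob_space P" and r: "0 < r" "r < 1"
    and normX: "is_mvn0 P n (equicorr r) X" and normY: "is_mvn0 P n (equicorr r) Y"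
    and indep: "prob_space.indep_var P (PI n) (\<lambda>\<omega>. \<lambda>i\<in>{..<n}. X i \<omega>) (PI n) (\<lambda>\<omega>. \<lambda>i\<in>{..<n}. Y i \<omega>)"
begin

interpretation prob_space P by (rule P)

lemmas hyps = P r normX normY indep

lemma Xm'[measurable]: "i < n \<Longrightarrow> X i \<in> borel_measurable P" and Ym'[measurable]: "i < n \<Longrightarrow> Y i \<in> borel_measurable P"
  using normX normY unfolding is_mvn0_def by auto

lemma cvarY_meas[measurable]: "(\<lambda>\<omega>. cvar n (\<lambda>i. Y i \<omega>)) \<in> borel_measurable P"
  unfolding cvar_def sample_mean_def by measurable

lemma bound1:
  assumes n: "0 < n"
  shows "norm (char (distr P borel (Acov n X Y)) t - complex_of_real (exp (- (t\<^sup>2 * (1 - r)\<^sup>2) / 2)))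
     \<le> (t\<^sup>2 * (1 - r) / 2) * (1 / sqrt (real n) + sqrt (real n) * ((1 - r)\<^sup>2 * (2 * real n - 1) / (real n)\<^sup>2))"
proof -
  define \<beta> where "\<beta> = t\<^sup>2 * (1 - r) / 2"
  define b where "b \<omega> = cvar n (\<lambda>i. Y i \<omega>) / real n" for \<omega>
  define d where "d = 1 / sqrt (real n)"
  have d: "0 < d" using n by (simp add: d_def)
  have \<beta>: "0 \<le> \<beta>" using r by (simp add: \<beta>_def)
  have b0: "0 \<le> b \<omega>" for \<omega> by (simp add: b_def cvar_def sum_nonneg)
  have [measurable]: "b \<in> borel_measurable P" unfolding b_def by measurable
  have intdev: "integrable P (\<lambda>\<omega>. (b \<omega> - (1 - r))\<^sup>2)" unfolding b_def by (rule EVdev(1)[OF P normY r n])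
  have Edev: "(\<integral>\<omega>. (b \<omega> - (1 - r))\<^sup>2 \<partial>P) = (1 - r)\<^sup>2 * (2 * real n - 1) / (real n)\<^sup>2"
    unfolding b_def by (rule EVdev(2)[OF P normY r n])
  have ce: "char (distr P borel (Acov n X Y)) t = complex_of_real (\<integral>\<omega>. exp (- (\<beta> * b \<omega>)) \<partial>P)"
    unfolding charA[OF hyps] by (simp add: \<beta>_def b_def field_simps)
  have ie: "integrable P (\<lambda>\<omega>. exp (- (\<beta> * b \<omega>)))"
    by (rule integrable_const_bound[where B=1]) (use \<beta> b0 in auto)
  have "exp (- (t\<^sup>2 * (1 - r)\<^sup>2) / 2) = exp (- (\<beta> * (1 - r)))"
    by (simp add: \<beta>_def power2_eq_square field_simps)
  then have "norm (char (distr P borel (Acov n X Y)) t - complex_of_real (exp (- (t\<^sup>2 * (1 - r)\<^sup>2) / 2)))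
     = \<bar>(\<integral>\<omega>. exp (- (\<beta> * b \<omega>)) \<partial>P) - exp (- (\<beta> * (1 - r)))\<bar>"
    unfolding ce by (simp flip: of_real_diff)
  also have "\<dots> = \<bar>\<integral>\<omega>. exp (- (\<beta> * b \<omega>)) - exp (- (\<beta> * (1 - r))) \<partial>P\<bar>"
    using ie by (simp add: prob_space)
  also have "\<dots> \<le> (\<integral>\<omega>. \<bar>exp (- (\<beta> * b \<omega>)) - exp (- (\<beta> * (1 - r)))\<bar> \<partial>P)"
    by (rule integral_abs_bound)
  also have "\<dots> \<le> (\<integral>\<omega>. \<beta> * (d + (b \<omega> - (1 - r))\<^sup>2 / d) \<partial>P)"
  proof (rule integral_mono)
    show "integrable P (\<lambda>\<omega>. \<bar>exp (- (\<beta> * b \<omega>)) - exp (- (\<beta> * (1 - r)))\<bar>)" using ie by auto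
    show "integrable P (\<lambda>\<omega>. \<beta> * (d + (b \<omega> - (1 - r))\<^sup>2 / d))" using intdev by auto
    fix \<omega>
    have "\<bar>exp (- (\<beta> * b \<omega>)) - exp (- (\<beta> * (1 - r)))\<bar> \<le> \<bar>\<beta> * b \<omega> - \<beta> * (1 - r)\<bar>"
      by (rule exp_neg_diff) (use \<beta> b0 r in auto)
    also have "\<dots> = \<beta> * \<bar>b \<omega> - (1 - r)\<bar>" using \<beta> by (simp add: abs_mult flip: right_diff_distrib)
    also have "\<dots> \<le> \<beta> * (d + (b \<omega> - (1 - r))\<^sup>2 / d)"
      by (intro mult_left_mono abs_le_l2 d \<beta>)
    finally show "\<bar>exp (- (\<beta> * b \<omega>)) - exp (- (\<beta> * (1 - r)))\<bar> \<le> \<beta> * (d + (b \<omega> - (1 - r))\<^sup>2 / d)" .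
  qed
  also have "\<dots> = \<beta> * (d + (\<integral>\<omega>. (b \<omega> - (1 - r))\<^sup>2 \<partial>P) / d)"
    using intdev by (simp add: prob_space)
  also have "\<dots> = (t\<^sup>2 * (1 - r) / 2) * (1 / sqrt (real n) + sqrt (real n) * ((1 - r)\<^sup>2 * (2 * real n - 1) / (real n)\<^sup>2))"
    unfolding Edev by (simp add: \<beta>_def d_def)
  finally show ?thesis .
qed

lemma cvarX_meas[measurable]: "(\<lambda>\<omega>. cvar n (\<lambda>i. X i \<omega>)) \<in> borel_measurable P"
  unfolding cvar_def sample_mean_def by measurable

lemma Zc_meas[measurable]: "(\<lambda>\<omega>. sqrt (real n) * sample_corr n (\<lambda>i. X i \<omega>) (\<lambda>i. Y i \<omega>)) \<in> borel_measurable P"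
  unfolding sample_corr_def sample_mean_def by measurable

lemma Acov_m[measurable]: "Acov n X Y \<in> borel_measurable P"
  by (rule Acov_meas[OF hyps])

lemma char_scale: "0 < c \<Longrightarrow> char (distr P borel (\<lambda>\<omega>. Acov n X Y \<omega> / c)) t = char (distr P borel (Acov n X Y)) (t / c)"
  unfolding char_def by (subst integral_distr, simp, simp)+ (simp add: field_simps)

lemma bound2:
  assumes n: "0 < n" and d: "0 < d" "d \<le> (1 - r) / 2"
  shows "norm (char (distr P borel (\<lambda>\<omega>. sqrt (real n) * sample_corr n (\<lambda>i. X i \<omega>) (\<lambda>i. Y i \<omega>))) t
            - char (distr P borel (Acov n X Y)) (t / (1 - r)))
     \<le> \<bar>t\<bar> * (2 * d / (1 - r)\<^sup>2) * (1 + (1 - r)\<^sup>2) + 2 * (2 * ((1 - r)\<^sup>2 * (2 * real n - 1) / (real n)\<^sup>2)) / d\<^sup>2"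
proof -
  define c where "c = 1 - r"
  have c: "0 < c" using r by (simp add: c_def)
  define A where "A = Acov n X Y"
  define a where "a \<omega> = cvar n (\<lambda>i. X i \<omega>) / real n" for \<omega>
  define b where "b \<omega> = cvar n (\<lambda>i. Y i \<omega>) / real n" for \<omega>
  have [measurable]: "A \<in> borel_measurable P" "a \<in> borel_measurable P" "b \<in> borel_measurable P"
    unfolding A_def a_def b_def by measurable
  have a0: "0 \<le> a \<omega>" and b0: "0 \<le> b \<omega>" for \<omega> by (simp_all add: a_def b_def cvar_def sum_nonneg)
  have Zeq: "sqrt (real n) * sample_corr n (\<lambda>i. X i \<omega>) (\<lambda>i. Y i \<omega>) = A \<omega> / sqrt (a \<omega> * b \<omega>)" for \<omega>
    unfolding A_def a_def b_def Acov_def[OF hyps] using corr_ratio[OF n] by simp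
  have intA: "integrable P (\<lambda>\<omega>. (A \<omega>)\<^sup>2)" and EA: "(\<integral>\<omega>. (A \<omega>)\<^sup>2 \<partial>P) \<le> c\<^sup>2"
    unfolding A_def c_def using EA2[OF hyps n] by auto
  have inta: "integrable P (\<lambda>\<omega>. (a \<omega> - c)\<^sup>2)" and Ea: "(\<integral>\<omega>. (a \<omega> - c)\<^sup>2 \<partial>P) = c\<^sup>2 * (2 * real n - 1) / (real n)\<^sup>2"
    unfolding a_def c_def using EVdev[OF P normX r n] by auto
  have intb: "integrable P (\<lambda>\<omega>. (b \<omega> - c)\<^sup>2)" and Eb: "(\<integral>\<omega>. (b \<omega> - c)\<^sup>2 \<partial>P) = c\<^sup>2 * (2 * real n - 1) / (real n)\<^sup>2"
    unfolding b_def c_def using EVdev[OF P normY r n] by auto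
  have i1: "integrable P (\<lambda>\<omega>. iexp (t * (A \<omega> / sqrt (a \<omega> * b \<omega>))))"
    by (rule integrable_const_bound[where B=1]) (auto simp: norm_exp_i_times)
  have i2: "integrable P (\<lambda>\<omega>. iexp (t * (A \<omega> / c)))"
    by (rule integrable_const_bound[where B=1]) (auto simp: norm_exp_i_times)
  have "char (distr P borel (\<lambda>\<omega>. sqrt (real n) * sample_corr n (\<lambda>i. X i \<omega>) (\<lambda>i. Y i \<omega>))) t
      - char (distr P borel (Acov n X Y)) (t / (1 - r))
      = (\<integral>\<omega>. iexp (t * (A \<omega> / sqrt (a \<omega> * b \<omega>))) \<partial>P) - (\<integral>\<omega>. iexp (t * (A \<omega> / c)) \<partial>P)"
    unfolding char_scale[OF c[unfolded c_def], symmetric] c_def[symmetric] A_def[symmetric]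
    unfolding char_def by (subst integral_distr, simp, simp)+ (simp add: Zeq)
  also have "\<dots> = (\<integral>\<omega>. iexp (t * (A \<omega> / sqrt (a \<omega> * b \<omega>))) - iexp (t * (A \<omega> / c)) \<partial>P)"
    using i1 i2 by simp
  finally have eq: "char (distr P borel (\<lambda>\<omega>. sqrt (real n) * sample_corr n (\<lambda>i. X i \<omega>) (\<lambda>i. Y i \<omega>))) t
      - char (distr P borel (Acov n X Y)) (t / (1 - r)) = (\<integral>\<omega>. iexp (t * (A \<omega> / sqrt (a \<omega> * b \<omega>))) - iexp (t * (A \<omega> / c)) \<partial>P)" .
  have "norm (\<integral>\<omega>. iexp (t * (A \<omega> / sqrt (a \<omega> * b \<omega>))) - iexp (t * (A \<omega> / c)) \<partial>P)
     \<le> (\<integral>\<omega>. norm (iexp (t * (A \<omega> / sqrt (a \<omega> * b \<omega>))) - iexp (t * (A \<omega> / c))) \<partial>P)"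
    by (rule integral_norm_bound)
  also have "\<dots> \<le> (\<integral>\<omega>. \<bar>t\<bar> * (2 * d / c\<^sup>2) * (1 + (A \<omega>)\<^sup>2) + 2 * ((a \<omega> - c)\<^sup>2 + (b \<omega> - c)\<^sup>2) / d\<^sup>2 \<partial>P)"
  proof (rule integral_mono)
    show "integrable P (\<lambda>\<omega>. norm (iexp (t * (A \<omega> / sqrt (a \<omega> * b \<omega>))) - iexp (t * (A \<omega> / c))))"
      using i1 i2 by auto
    show "integrable P (\<lambda>\<omega>. \<bar>t\<bar> * (2 * d / c\<^sup>2) * (1 + (A \<omega>)\<^sup>2) + 2 * ((a \<omega> - c)\<^sup>2 + (b \<omega> - c)\<^sup>2) / d\<^sup>2)"
      using intA inta intb by auto
    fix \<omega> show "norm (iexp (t * (A \<omega> / sqrt (a \<omega> * b \<omega>))) - iexp (t * (A \<omega> / c)))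
      \<le> \<bar>t\<bar> * (2 * d / c\<^sup>2) * (1 + (A \<omega>)\<^sup>2) + 2 * ((a \<omega> - c)\<^sup>2 + (b \<omega> - c)\<^sup>2) / d\<^sup>2"
      by (rule ratio_bound[OF a0 b0 c d(1) d(2)[folded c_def]])
  qed
  also have "\<dots> = \<bar>t\<bar> * (2 * d / c\<^sup>2) * (1 + (\<integral>\<omega>. (A \<omega>)\<^sup>2 \<partial>P)) + 2 * ((\<integral>\<omega>. (a \<omega> - c)\<^sup>2 \<partial>P) + (\<integral>\<omega>. (b \<omega> - c)\<^sup>2 \<partial>P)) / d\<^sup>2"
    using intA inta intb by (simp add: prob_space)
  also have "\<dots> \<le> \<bar>t\<bar> * (2 * d / c\<^sup>2) * (1 + c\<^sup>2) + 2 * (2 * (c\<^sup>2 * (2 * real n - 1) / (real n)\<^sup>2)) / d\<^sup>2"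
    unfolding Ea Eb using EA d c by (intro add_mono mult_left_mono) auto
  finally show ?thesis unfolding eq c_def .
qed

end


lemma lim_inv_sqrt: "(\<lambda>n. C / sqrt (real n)) \<longlonglongrightarrow> 0"
  by (intro tendsto_divide_0[OF tendsto_const] filterlim_at_top_imp_at_infinity
      filterlim_compose[OF sqrt_at_top filterlim_real_sequentially])

lemma lim_inv_sqrt2: "(\<lambda>n. C / sqrt (sqrt (real n))) \<longlonglongrightarrow> 0"
  by (intro tendsto_divide_0[OF tendsto_const] filterlim_at_top_imp_at_infinity
      filterlim_compose[OF sqrt_at_top filterlim_compose[OF sqrt_at_top filterlim_real_sequentially]])

lemma aux1: "0 < n \<Longrightarrow> sqrt (real n) * ((2 * real n - 1) / (real n)\<^sup>2) \<le> 2 / sqrt (real n)"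
proof -
  assume n: "0 < n"
  have s: "sqrt (real n) * sqrt (real n) = real n" by simp
  have "sqrt (real n) * ((2 * real n - 1) / (real n)\<^sup>2) \<le> sqrt (real n) * ((2 * real n) / (real n)\<^sup>2)"
    using n by (intro mult_left_mono divide_right_mono) auto
  also have "\<dots> = 2 * sqrt (real n) / real n" using n by (simp add: power2_eq_square)
  also have "\<dots> = 2 / sqrt (real n)" using n by (subst s[symmetric]) (simp add: field_simps)
  finally show ?thesis .
qed

lemma normal_char: assumes "0 < c"
  shows "char (density lborel (normal_density 0 c)) t = complex_of_real (exp (- (t\<^sup>2 * c\<^sup>2) / 2))"
proof -
  have "char (density lborel (normal_density 0 c)) t = char (distr std_normal_distribution borel (\<lambda>x. c * x)) t"
    using std_normal_affine_distr[OF assms] by simp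
  also have "\<dots> = char std_normal_distribution (t * c)"
    unfolding char_def by (subst integral_distr) (auto simp: ac_simps)
  finally show ?thesis by (simp add: char_std_normal_distribution power_mult_distrib)
qed

lemma normal_rd: "0 < c \<Longrightarrow> real_distribution (density lborel (normal_density 0 c))"
  using prob_space_normal_density[of c 0] by (auto simp: real_distribution_def real_distribution_axioms_def)



lemma aux2: "0 < n \<Longrightarrow> sqrt (real n) * (c\<^sup>2 * (2 * real n - 1) / (real n)\<^sup>2) \<le> c\<^sup>2 * (2 / sqrt (real n))"
proof -
  assume n: "0 < n"
  have "c\<^sup>2 * (sqrt (real n) * ((2 * real n - 1) / (real n)\<^sup>2)) \<le> c\<^sup>2 * (2 / sqrt (real n))"
    by (intro mult_left_mono aux1[OF n]) simp
  then show ?thesis by (simp add: algebra_simps)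
qed

theorem corollary2:
  fixes r :: real
    and M :: "nat \<Rightarrow> 'a measure"
    and X Y :: "nat \<Rightarrow> nat \<Rightarrow> 'a \<Rightarrow> real"
  assumes r: "0 < r" "r < 1"
    and prob: "\<And>n. prob_space (M n)"
    and normX: "\<And>n. is_mvn0 (M n) n (equicorr r) (X n)"
    and normY: "\<And>n. is_mvn0 (M n) n (equicorr r) (Y n)"
    and indep: "\<And>n. prob_space.indep_var (M n)
                   (PiM {..<n} (\<lambda>_. borel)) (\<lambda>\<omega>. \<lambda>i\<in>{..<n}. X n i \<omega>)
                   (PiM {..<n} (\<lambda>_. borel)) (\<lambda>\<omega>. \<lambda>i\<in>{..<n}. Y n i \<omega>)"
  shows "weak_conv_m
           (\<lambda>n. distr (M n) borel (\<lambda>\<omega>. sqrt (real n) * sample_cov n (\<lambda>i. X n i \<omega>) (\<lambda>i. Y n i \<omega>)))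
           (density lborel (normal_density 0 (1 - r)))
       \<and> weak_conv_m
           (\<lambda>n. distr (M n) borel (\<lambda>\<omega>. sqrt (real n) * sample_corr n (\<lambda>i. X n i \<omega>) (\<lambda>i. Y n i \<omega>)))
           (density lborel std_normal_density)"
proof -
  define c where "c = 1 - r"
  have c: "0 < c" using r by (simp add: c_def)
  note hyps = prob r normX normY indep
  have Aeq: "(\<lambda>\<omega>. sqrt (real n) * sample_cov n (\<lambda>i. X n i \<omega>) (\<lambda>i. Y n i \<omega>)) = Acov n (X n) (Y n)" for n
    using Acov_def[OF hyps] by auto
  have rdA: "real_distribution (distr (M n) borel (Acov n (X n) (Y n)))" for n
  proof -
    interpret prob_space "M n" by (rule prob)
    show ?thesis by (rule real_distribution_distr) (rule Acov_meas[OF hyps])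
  qed
  have rdZ: "real_distribution (distr (M n) borel (\<lambda>\<omega>. sqrt (real n) * sample_corr n (\<lambda>i. X n i \<omega>) (\<lambda>i. Y n i \<omega>)))" for n
  proof -
    interpret prob_space "M n" by (rule prob)
    show ?thesis by (rule real_distribution_distr) (rule Zc_meas[OF hyps])
  qed
  have convA: "(\<lambda>n. char (distr (M n) borel (Acov n (X n) (Y n))) t) \<longlonglongrightarrow> complex_of_real (exp (- (t\<^sup>2 * c\<^sup>2) / 2))" for t
  proof -
    define K where "K = t\<^sup>2 * c / 2 * (1 + 2 * c\<^sup>2)"
    have "\<forall>\<^sub>F n in sequentially. norm (char (distr (M n) borel (Acov n (X n) (Y n))) t - complex_of_real (exp (- (t\<^sup>2 * c\<^sup>2) / 2))) \<le> K / sqrt (real n)"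
    proof (rule eventually_sequentiallyI[of 1])
      fix n :: nat assume "1 \<le> n"
      then have n: "0 < n" by simp
      have "norm (char (distr (M n) borel (Acov n (X n) (Y n))) t - complex_of_real (exp (- (t\<^sup>2 * c\<^sup>2) / 2)))
        \<le> (t\<^sup>2 * c / 2) * (1 / sqrt (real n) + sqrt (real n) * (c\<^sup>2 * (2 * real n - 1) / (real n)\<^sup>2))"
        using bound1[OF hyps n, of t] unfolding c_def .
      also have "\<dots> \<le> (t\<^sup>2 * c / 2) * (1 / sqrt (real n) + c\<^sup>2 * (2 / sqrt (real n)))"
        using aux2[OF n] c by (intro mult_left_mono add_left_mono) auto
      also have "\<dots> = K / sqrt (real n)" using n by (simp add: K_def field_simps)
      finally show "norm (char (distr (M n) borel (Acov n (X n) (Y n))) t - complex_of_real (exp (- (t\<^sup>2 * c\<^sup>2) / 2))) \<le> K / sqrt (real n)" .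
    qed
    then have "(\<lambda>n. char (distr (M n) borel (Acov n (X n) (Y n))) t - complex_of_real (exp (- (t\<^sup>2 * c\<^sup>2) / 2))) \<longlonglongrightarrow> 0"
      by (rule Lim_null_comparison) (rule lim_inv_sqrt)
    then show ?thesis by (simp add: LIM_zero_iff)
  qed
  have part1: "weak_conv_m (\<lambda>n. distr (M n) borel (Acov n (X n) (Y n))) (density lborel (normal_density 0 c))"
    by (rule levy_continuity[OF rdA normal_rd[OF c]]) (unfold normal_char[OF c], rule convA)
  have convZ: "(\<lambda>n. char (distr (M n) borel (\<lambda>\<omega>. sqrt (real n) * sample_corr n (\<lambda>i. X n i \<omega>) (\<lambda>i. Y n i \<omega>))) t)
      \<longlonglongrightarrow> complex_of_real (exp (- (t\<^sup>2) / 2))" for t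
  proof -
    define K where "K = \<bar>t\<bar> * (1 + c\<^sup>2) / c + 32 + (t / c)\<^sup>2 * c / 2 * (1 + 2 * c\<^sup>2)"
    have "\<forall>\<^sub>F n in sequentially. norm (char (distr (M n) borel (\<lambda>\<omega>. sqrt (real n) * sample_corr n (\<lambda>i. X n i \<omega>) (\<lambda>i. Y n i \<omega>))) t
      - complex_of_real (exp (- (t\<^sup>2) / 2))) \<le> K / sqrt (sqrt (real n))"
    proof (rule eventually_sequentiallyI[of 1])
      fix n :: nat assume "1 \<le> n"
      then have n: "0 < n" and n1: "1 \<le> real n" by auto
      define s where "s = sqrt (sqrt (real n))"
      have s1: "1 \<le> s" using n1 by (simp add: s_def)
      have s2: "s\<^sup>2 = sqrt (real n)" by (simp add: s_def)
      have s4: "s\<^sup>2 * s\<^sup>2 = real n" by (simp add: s2)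
      define d where "d = c / (2 * s)"
      have "c / (2 * s) \<le> c / 2" using c s1 by (intro divide_left_mono) auto
      then have d: "0 < d" "d \<le> (1 - r) / 2" using c s1 by (auto simp: d_def c_def)
      define ZA where "ZA = char (distr (M n) borel (Acov n (X n) (Y n))) (t / c)"
      have b2: "norm (char (distr (M n) borel (\<lambda>\<omega>. sqrt (real n) * sample_corr n (\<lambda>i. X n i \<omega>) (\<lambda>i. Y n i \<omega>))) t - ZA)
         \<le> \<bar>t\<bar> * (2 * d / c\<^sup>2) * (1 + c\<^sup>2) + 2 * (2 * (c\<^sup>2 * (2 * real n - 1) / (real n)\<^sup>2)) / d\<^sup>2"
        using bound2[OF hyps n d, of t] unfolding ZA_def c_def .
      have b1: "norm (ZA - complex_of_real (exp (- (t\<^sup>2) / 2)))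
         \<le> ((t / c)\<^sup>2 * c / 2) * (1 / sqrt (real n) + sqrt (real n) * (c\<^sup>2 * (2 * real n - 1) / (real n)\<^sup>2))"
      proof -
        have "exp (- ((t / c)\<^sup>2 * c\<^sup>2) / 2) = exp (- (t\<^sup>2) / 2)" using c by (simp add: power_divide)
        then show ?thesis using bound1[OF hyps n, of "t / c"] unfolding ZA_def c_def by simp
      qed
      have e1: "\<bar>t\<bar> * (2 * d / c\<^sup>2) * (1 + c\<^sup>2) = (\<bar>t\<bar> * (1 + c\<^sup>2) / c) / s"
        using c s1 by (simp add: d_def power2_eq_square field_simps)
      have e2: "2 * (2 * (c\<^sup>2 * (2 * real n - 1) / (real n)\<^sup>2)) / d\<^sup>2 \<le> 32 / s"
      proof -
        have "2 * (2 * (c\<^sup>2 * (2 * real n - 1) / (real n)\<^sup>2)) / d\<^sup>2 = 16 * s\<^sup>2 * ((2 * real n - 1) / (real n)\<^sup>2)"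
          using c s1 n by (simp add: d_def power2_eq_square field_simps)
        also have "\<dots> \<le> 16 * s\<^sup>2 * (2 / real n)"
          using n by (intro mult_left_mono) (auto simp: power2_eq_square field_simps)
        also have "\<dots> = 32 / (s\<^sup>2)" using s1 unfolding s4[symmetric] by (simp add: field_simps)
        also have "\<dots> \<le> 32 / s" using s1 by (intro divide_left_mono) (auto simp: power2_eq_square)
        finally show ?thesis .
      qed
      have e3: "((t / c)\<^sup>2 * c / 2) * (1 / sqrt (real n) + sqrt (real n) * (c\<^sup>2 * (2 * real n - 1) / (real n)\<^sup>2))
          \<le> ((t / c)\<^sup>2 * c / 2 * (1 + 2 * c\<^sup>2)) / s"
      proof -
        have "((t / c)\<^sup>2 * c / 2) * (1 / sqrt (real n) + sqrt (real n) * (c\<^sup>2 * (2 * real n - 1) / (real n)\<^sup>2))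
           \<le> ((t / c)\<^sup>2 * c / 2) * (1 / sqrt (real n) + c\<^sup>2 * (2 / sqrt (real n)))"
          using aux2[OF n] c by (intro mult_left_mono add_left_mono) auto
        also have "\<dots> = ((t / c)\<^sup>2 * c / 2 * (1 + 2 * c\<^sup>2)) / s\<^sup>2" unfolding s2 using n by (simp add: field_simps)
        also have "\<dots> \<le> ((t / c)\<^sup>2 * c / 2 * (1 + 2 * c\<^sup>2)) / s"
          using s1 c by (intro divide_left_mono) (auto simp: power2_eq_square)
        finally show ?thesis .
      qed
      have "norm (char (distr (M n) borel (\<lambda>\<omega>. sqrt (real n) * sample_corr n (\<lambda>i. X n i \<omega>) (\<lambda>i. Y n i \<omega>))) t
          - complex_of_real (exp (- (t\<^sup>2) / 2)))
        \<le> norm (char (distr (M n) borel (\<lambda>\<omega>. sqrt (real n) * sample_corr n (\<lambda>i. X n i \<omega>) (\<lambda>i. Y n i \<omega>))) t - ZA)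
          + norm (ZA - complex_of_real (exp (- (t\<^sup>2) / 2)))"
        by (rule norm_diff_triangle_ineq[THEN order_trans[rotated]]) simp
      also have "\<dots> \<le> (\<bar>t\<bar> * (1 + c\<^sup>2) / c) / s + 32 / s + ((t / c)\<^sup>2 * c / 2 * (1 + 2 * c\<^sup>2)) / s"
        using b1 b2 e1 e2 e3 by linarith
      also have "\<dots> = K / sqrt (sqrt (real n))" by (simp add: K_def s_def add_divide_distrib)
      finally show "norm (char (distr (M n) borel (\<lambda>\<omega>. sqrt (real n) * sample_corr n (\<lambda>i. X n i \<omega>) (\<lambda>i. Y n i \<omega>))) t
          - complex_of_real (exp (- (t\<^sup>2) / 2))) \<le> K / sqrt (sqrt (real n))" .
    qed
    then have "(\<lambda>n. char (distr (M n) borel (\<lambda>\<omega>. sqrt (real n) * sample_corr n (\<lambda>i. X n i \<omega>) (\<lambda>i. Y n i \<omega>))) t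
      - complex_of_real (exp (- (t\<^sup>2) / 2))) \<longlonglongrightarrow> 0"
      by (rule Lim_null_comparison) (rule lim_inv_sqrt2)
    then show ?thesis by (simp add: LIM_zero_iff)
  qed
  have part2: "weak_conv_m (\<lambda>n. distr (M n) borel (\<lambda>\<omega>. sqrt (real n) * sample_corr n (\<lambda>i. X n i \<omega>) (\<lambda>i. Y n i \<omega>)))
           (density lborel std_normal_density)"
    by (rule levy_continuity[OF rdZ real_dist_normal_dist]) (unfold char_std_normal_distribution, rule convZ)
  show ?thesis using part1 part2 unfolding Aeq c_def by simp
qed


end
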